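(* Let $r\geq 2$ and $0<a<\frac{1}{r(r+1)}$. Let $X$ be a finite set of cardinality $n$ and let $A_1,\dots,A_{r+1}\subseteq X$ satisfy $$\sum_{i=1}^{r+1}|A_i|\geq\left(r-\frac1r-(r+1)a\right)n.$$ Then there exist $1\leq k<l\leq r+1$ with $$|A_k\cap A_l|\geq\left(\frac{r-2}{r}+\frac{2}{r^{2}(r+1)}-\frac{2(r-1)}{r}a\right)n.$$ *)

theory Defs
  imports Main Complex_Main
begin

end

theory Submission
  imports Defs
begin

lemma int_sq_bound:
  fixes m r :: nat
  shows "(real m)^2 \<ge> (2 * real r - 1) * real m - real r * (real r - 1)"
proof -
  have "(real m - real r) * (real m - real r + 1) \<ge> 0"
  proof (cases "m \<ge> r")
    case True then show ?thesis by (intro mult_nonneg_nonneg) auto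
  next
    case False then have "real m + 1 \<le> real r" by linarith
    then show ?thesis by (intro mult_nonpos_nonpos) auto
  qed
  then show ?thesis by (simp add: algebra_simps power2_eq_square)
qed

lemma ident:
  fixes x a N :: real
  assumes "x > 0"
  shows "(2 * x - 2) * ((x - 1 / x - (x + 1) * a) * N) - x * (x - 1) * N
     = x * (x + 1) * (((x - 2) / x + 2 / (x^2 * (x + 1)) - 2 * (x - 1) / x * a) * N)"
proof -
  have e1: "x * (x + 1) * ((x - 2) / x) = (x+1)*(x-2)" using assms by simp
  have e2: "x * (x + 1) * (2 / (x^2 * (x + 1))) = 2 / x"
  proof -
    have y: "x * (x + 1) \<noteq> 0" using assms by simp
    have "x * (x + 1) * (2 / (x^2 * (x + 1))) = (2 * (x * (x + 1))) / (x * (x * (x + 1)))"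
      by (simp add: power2_eq_square algebra_simps)
    also have "\<dots> = 2 / x" by (rule nonzero_mult_divide_mult_cancel_right[OF y])
    finally show ?thesis .
  qed
  have e3: "x * (x + 1) * (2 * (x - 1) / x * a) = 2*(x+1)*(x-1)*a" using assms by (simp add: field_simps)
  have e4: "(2 * x - 2) * (1 / x) = 2 - 2 / x" using assms by (simp add: field_simps)
  have "x * (x + 1) * (((x - 2) / x + 2 / (x^2 * (x + 1)) - 2 * (x - 1) / x * a) * N)
     = (x * (x + 1) * ((x - 2) / x) + x * (x + 1) * (2 / (x^2 * (x + 1))) - x * (x + 1) * (2 * (x - 1) / x * a)) * N"
    by (simp add: algebra_simps)
  also have "\<dots> = ((x+1)*(x-2) + 2 / x - 2*(x+1)*(x-1)*a) * N" by (simp only: e1 e2 e3)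
  also have "(2 * x - 2) * ((x - 1 / x - (x + 1) * a) * N) = ((2*x-2)*x - (2 * x - 2) * (1 / x) - (2*x-2)*(x+1)*a) * N"
    by (simp add: algebra_simps)
  ultimately show ?thesis unfolding e4 by (simp add: algebra_simps)
qed

theorem lemma4:
  fixes r n :: nat and a :: real and X :: "'x set" and A :: "nat \<Rightarrow> 'x set"
  assumes "r \<ge> 2"
    and "0 < a" and "a < 1 / (real r * (real r + 1))"
    and "finite X" and "card X = n"
    and "\<And>i. i \<in> {1..r+1} \<Longrightarrow> A i \<subseteq> X"
    and "(\<Sum>i=1..r+1. real (card (A i))) \<ge> (real r - 1 / real r - (real r + 1) * a) * real n"
  shows "\<exists>k l. 1 \<le> k \<and> k < l \<and> l \<le> r + 1 \<and>
    real (card (A k \<inter> A l)) \<ge>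
      ((real r - 2) / real r + 2 / ((real r)^2 * (real r + 1)) - 2 * (real r - 1) / real r * a) * real n"
proof (rule ccontr)
  define I where "I = {1..r+1}"
  define T where "T = ((real r - 2) / real r + 2 / ((real r)^2 * (real r + 1)) - 2 * (real r - 1) / real r * a) * real n"
  define ind where "ind i x = (if x \<in> A i then 1 else (0::real))" for i x
  define S where "S = (\<Sum>i\<in>I. real (card (A i)))"
  define c where "c i j = real (card (A i \<inter> A j))" for i j
  assume "\<not> ?thesis"
  then have lt: "c k l < T" if "k \<in> I" "l \<in> I" "k < l" for k l
    using that unfolding I_def c_def T_def by force
  have lt2: "c i j < T" if "i \<in> I" "j \<in> I" "i \<noteq> j" for i j
  proof (cases "i < j")
    case True then show ?thesis using lt that by auto
  next
    case False then have "j < i" using that by auto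
    then show ?thesis using lt[of j i] that by (simp add: c_def Int_commute)
  qed
  have fI: "finite I" unfolding I_def by simp
  have cardI: "card I = r + 1" unfolding I_def by simp
  have sub: "A i \<subseteq> X" if "i \<in> I" for i using assms(6) that unfolding I_def by auto
  have cA: "real (card (A i)) = (\<Sum>x\<in>X. ind i x)" if "i \<in> I" for i
  proof -
    have "(\<Sum>x\<in>X. ind i x) = real (card (X \<inter> {x. x \<in> A i}))"
      unfolding ind_def using assms(4) by (simp add: sum.If_cases)
    also have "X \<inter> {x. x \<in> A i} = A i" using sub[OF that] by auto
    finally show ?thesis by simp
  qed
  have cAA: "c i j = (\<Sum>x\<in>X. ind i x * ind j x)" if "i \<in> I" "j \<in> I" for i j
  proof -
    have "(\<Sum>x\<in>X. ind i x * ind j x) = (\<Sum>x\<in>X. if x \<in> A i \<inter> A j then 1 else 0)"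
      unfolding ind_def by (intro sum.cong) auto
    also have "\<dots> = real (card (X \<inter> {x. x \<in> A i \<inter> A j}))"
      using assms(4) by (simp add: sum.If_cases)
    also have "X \<inter> {x. x \<in> A i \<inter> A j} = A i \<inter> A j" using sub[OF that(1)] by auto
    finally show ?thesis unfolding c_def by simp
  qed
  define d where "d x = (\<Sum>i\<in>I. ind i x)" for x
  have dnat: "d x = real (card {i\<in>I. x \<in> A i})" for x
    unfolding d_def ind_def using fI by (simp add: sum.If_cases Int_def)
  have S_eq: "S = (\<Sum>x\<in>X. d x)"
    unfolding S_def d_def by (simp add: cA) (rule sum.swap)
  have Q_eq: "(\<Sum>i\<in>I. \<Sum>j\<in>I. c i j) = (\<Sum>x\<in>X. (d x)^2)"
  proof -
    have "(\<Sum>i\<in>I. \<Sum>j\<in>I. c i j) = (\<Sum>i\<in>I. \<Sum>j\<in>I. \<Sum>x\<in>X. ind i x * ind j x)"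
      by (simp add: cAA)
    also have "\<dots> = (\<Sum>i\<in>I. \<Sum>x\<in>X. \<Sum>j\<in>I. ind i x * ind j x)"
      by (intro sum.cong refl sum.swap)
    also have "\<dots> = (\<Sum>x\<in>X. \<Sum>i\<in>I. \<Sum>j\<in>I. ind i x * ind j x)"
      by (rule sum.swap)
    also have "\<dots> = (\<Sum>x\<in>X. (d x)^2)"
      unfolding d_def power2_eq_square by (simp add: sum_product)
    finally show ?thesis .
  qed
  have lower: "(\<Sum>x\<in>X. (d x)^2) \<ge> (2 * real r - 1) * S - real r * (real r - 1) * real n"
  proof -
    have "(\<Sum>x\<in>X. (d x)^2) \<ge> (\<Sum>x\<in>X. (2 * real r - 1) * d x - real r * (real r - 1))"
      unfolding dnat by (intro sum_mono int_sq_bound)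
    also have "(\<Sum>x\<in>X. (2 * real r - 1) * d x - real r * (real r - 1)) = (2 * real r - 1) * S - real r * (real r - 1) * real n"
      using assms(5) by (simp add: S_eq sum_subtractf sum_distrib_left)
    finally show ?thesis .
  qed
  have upper: "(\<Sum>i\<in>I. \<Sum>j\<in>I. c i j) < S + real r * (real r + 1) * T"
  proof -
    have "(\<Sum>i\<in>I. \<Sum>j\<in>I. c i j) = (\<Sum>i\<in>I. c i i + (\<Sum>j\<in>I-{i}. c i j))"
      using fI by (intro sum.cong refl) (simp add: sum.remove)
    also have "\<dots> = S + (\<Sum>i\<in>I. \<Sum>j\<in>I-{i}. c i j)"
      by (simp add: sum.distrib S_def c_def)
    also have "(\<Sum>i\<in>I. \<Sum>j\<in>I-{i}. c i j) < (\<Sum>i\<in>I. \<Sum>j\<in>I-{i}. T)"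
    proof (rule sum_strict_mono)
      show "finite I" by fact
      show "I \<noteq> {}" unfolding I_def by simp
      fix i assume i: "i \<in> I"
      show "(\<Sum>j\<in>I-{i}. c i j) < (\<Sum>j\<in>I-{i}. T)"
      proof (rule sum_strict_mono)
        show "finite (I - {i})" using fI by simp
        have "card (I - {i}) = r" using cardI i fI by simp
        then show "I - {i} \<noteq> {}" using assms(1) by (metis card.empty not_numeral_le_zero)
        fix j assume "j \<in> I - {i}" then show "c i j < T" using lt2 i by auto
      qed
    qed
    also have "(\<Sum>i\<in>I. \<Sum>j\<in>I-{i}. T) = real r * (real r + 1) * T"
      using cardI fI by (simp add: card_Diff_singleton)
    finally show ?thesis by simp
  qed
  have Sge: "S \<ge> (real r - 1 / real r - (real r + 1) * a) * real n"
    using assms(7) unfolding S_def I_def .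
  have key: "(2 * real r - 2) * S - real r * (real r - 1) * real n < real r * (real r + 1) * T"
  proof -
    have "(2 * real r - 1) * S = (2 * real r - 2) * S + S" by (simp add: algebra_simps)
    then show ?thesis using lower upper Q_eq by linarith
  qed
  have rpos: "real r > 0" using assms(1) by simp
  have "(2 * real r - 2) * S \<ge> (2 * real r - 2) * ((real r - 1 / real r - (real r + 1) * a) * real n)"
    using Sge assms(1) by (intro mult_left_mono) auto
  moreover have "(2 * real r - 2) * ((real r - 1 / real r - (real r + 1) * a) * real n) - real r * (real r - 1) * real n
     = real r * (real r + 1) * T"
    unfolding T_def using rpos by (rule ident)
  ultimately show False using key by linarith
qed

end
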